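(* Let $r\ge 2$, $d\ge 2$. Let $\Delta\subset\mathbb{R}^d$ be a regular simplex with vertices $v_1,\ldots,v_{d+1}$, and let $B$ be the closed Euclidean unit ball centred at the origin. Then for all sufficiently small $\varepsilon>0$ the following holds. Let $U_1\subset v_1+\varepsilon B$ be a set of $r$ points and, for $h\in\{2,\ldots,d+1\}$, let $U_h\subset v_h+\varepsilon B$ be a set of $r-1$ points, chosen so that the coordinates of the points of $A=\bigcup_{h=1}^{d+1}U_h$ are algebraically independent (so $|A|=(r-1)(d+1)+1$), and let $M=U_1$. Then $\operatorname{conv}M\cap\operatorname{conv}(A\setminus M)=\emptyset$, $|M|=r$, and there is no proper partition $\{A_1,\ldots,A_r\}$ of $A$ for which the solution $(z,\alpha)$ of \[ z=\sum_{x\in A_j}\alpha(x)\,x \quad\text{and}\quad 1=\sum_{x\in A_j}\alpha(x)\qquad\text{for all } j\in[r] \] satisfies $\alpha(x)<0$ for all $x\in M$ and $\alpha(x)>0$ for all $x\in A\setminus M$.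
   Context: A partition $\{A_1,\ldots,A_r\}$ of $A$ into $r$ parts is called proper if $1\le |A_j|\le d+1$ for every $j$. *)

theory Defs
  imports "HOL-Analysis.Analysis"
begin

text \<open>Algebraic independence over the rationals of a finite family of reals
  c indexed by I: no nonzero polynomial with rational coefficients (monomials
  given by exponent vectors supported in I) vanishes at c.\<close>
definition alg_indep :: "'i set \<Rightarrow> ('i \<Rightarrow> real) \<Rightarrow> bool" where
  "alg_indep I c \<longleftrightarrow>
     (\<forall>(S :: ('i \<Rightarrow> nat) set) (p :: ('i \<Rightarrow> nat) \<Rightarrow> real).
        finite S \<and> S \<subseteq> {m. \<forall>i. i \<notin> I \<longrightarrow> m i = 0} \<and> (\<forall>m\<in>S. p m \<in> \<rat>) \<and>
        (\<Sum>m\<in>S. p m * (\<Prod>i\<in>I. c i ^ m i)) = 0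
        \<longrightarrow> (\<forall>m\<in>S. p m = 0))"

definition coords_alg_indep :: "(real ^ 'n) set \<Rightarrow> bool" where
  "coords_alg_indep A \<longleftrightarrow> alg_indep (A \<times> (UNIV :: 'n set)) (\<lambda>(x, i). x $ i)"

definition regular_simplex :: "(nat \<Rightarrow> real ^ 'n) \<Rightarrow> bool" where
  "regular_simplex v \<longleftrightarrow>
     (\<exists>s>0. \<forall>i\<in>{1..CARD('n)+1}. \<forall>j\<in>{1..CARD('n)+1}. i \<noteq> j \<longrightarrow> dist (v i) (v j) = s)"

definition proper_partition :: "nat \<Rightarrow> (real ^ 'n) set \<Rightarrow> (nat \<Rightarrow> (real ^ 'n) set) \<Rightarrow> bool" where
  "proper_partition r A P \<longleftrightarrow>
     (\<Union>j\<in>{1..r}. P j) = A \<and>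
     (\<forall>j\<in>{1..r}. \<forall>k\<in>{1..r}. j \<noteq> k \<longrightarrow> P j \<inter> P k = {}) \<and>
     (\<forall>j\<in>{1..r}. finite (P j) \<and> 1 \<le> card (P j) \<and> card (P j) \<le> CARD('n) + 1)"

end

theory Submission
  imports Defs
begin

lemma core_ineq:
  fixes \<alpha> :: "'a \<Rightarrow> real" and F1 :: "'a \<Rightarrow> real" and f :: "nat \<Rightarrow> 'a \<Rightarrow> real"
  assumes H: "finite H" and c0: "c \<ge> 0" and c1: "c * 8 * real (card H) \<le> 1" and c4: "c \<le> 1/4"
    and J: "J \<noteq> {}"
    and parts: "\<forall>j\<in>J. finite (P j) \<and> (\<Sum>x\<in>P j. \<alpha> x) = 1 \<and> (\<Sum>x\<in>P j. \<alpha> x * F1 x) = W1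
        \<and> (\<forall>h\<in>H. (\<Sum>x\<in>P j. \<alpha> x * f h x) = W h)"
    and Wsum: "W1 + (\<Sum>h\<in>H. W h) = 1"
    and pts: "\<forall>j\<in>J. \<forall>x\<in>P j. (x\<in>M \<longrightarrow> \<alpha> x < 0 \<and> F1 x \<ge> 1 - c) \<and> (x\<notin>M \<longrightarrow> \<alpha> x > 0 \<and> F1 x \<le> c)"
    and miss: "\<forall>h\<in>H. \<exists>j\<in>J. \<forall>x\<in>P j. \<bar>f h x\<bar> \<le> c"
  shows False
proof -
  define T where "T j = (\<Sum>x\<in>P j. \<bar>\<alpha> x\<bar>)" for j
  define X where "X = 1/2 - W1"
  have Tb: "T j / 2 - c * T j \<le> X" if j: "j \<in> J" for j
  proof -
    have pt: "\<alpha> x * F1 x \<le> c * \<bar>\<alpha> x\<bar> + (\<alpha> x - \<bar>\<alpha> x\<bar>)/2" if "x \<in> P j" for x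
    proof (cases "x \<in> M")
      case True
      then have "\<alpha> x < 0" "F1 x \<ge> 1 - c" using pts j that by auto
      moreover have "\<alpha> x * F1 x \<le> \<alpha> x * (1 - c)" using calculation by (intro mult_left_mono_neg) auto
      ultimately show ?thesis by (simp add: algebra_simps)
    next
      case False
      then have "\<alpha> x > 0" "F1 x \<le> c" using pts j that by auto
      moreover have "\<alpha> x * F1 x \<le> \<alpha> x * c" using calculation by (intro mult_left_mono) auto
      ultimately show ?thesis by (simp add: algebra_simps)
    qed
    have "W1 = (\<Sum>x\<in>P j. \<alpha> x * F1 x)" using parts j by auto
    also have "\<dots> \<le> (\<Sum>x\<in>P j. c * \<bar>\<alpha> x\<bar> + (\<alpha> x - \<bar>\<alpha> x\<bar>)/2)"
      by (rule sum_mono) (use pt in auto)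
    also have "\<dots> = c * T j + ((\<Sum>x\<in>P j. \<alpha> x) - T j)/2"
      unfolding T_def by (simp add: sum.distrib sum_distrib_left sum_subtractf flip: sum_divide_distrib)
    also have "\<dots> = c * T j + (1 - T j)/2" using parts j by auto
    finally have "W1 \<le> c * T j + (1 - T j) / 2" .
    then show ?thesis unfolding X_def by argo
  qed
  have T0: "T j \<ge> 0" for j unfolding T_def by (simp add: sum_nonneg)
  obtain j0 where "j0 \<in> J" using J by auto
  have cT: "c * T j \<le> T j / 4" for j using mult_right_mono[OF c4 T0[of j]] by simp
  have X0: "X \<ge> 0" using Tb[OF \<open>j0 \<in> J\<close>] T0[of j0] cT[of j0] by argo
  have T4: "T j \<le> 4 * X" if "j \<in> J" for j
    using Tb[OF that] cT[of j] by argo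
  have Wb: "W h \<le> c * (4 * X)" if h: "h \<in> H" for h
  proof -
    obtain j where j: "j \<in> J" and jm: "\<forall>x\<in>P j. \<bar>f h x\<bar> \<le> c" using miss h by auto
    have "W h = (\<Sum>x\<in>P j. \<alpha> x * f h x)" using parts j h by auto
    also have "\<dots> \<le> (\<Sum>x\<in>P j. \<bar>\<alpha> x\<bar> * c)"
    proof (rule sum_mono)
      fix x assume "x \<in> P j"
      then have "\<bar>f h x\<bar> \<le> c" using jm by auto
      then have "\<bar>\<alpha> x\<bar> * \<bar>f h x\<bar> \<le> \<bar>\<alpha> x\<bar> * c" by (intro mult_left_mono) auto
      then show "\<alpha> x * f h x \<le> \<bar>\<alpha> x\<bar> * c" by (metis abs_ge_self abs_mult order_trans)
    qed
    also have "\<dots> = c * T j" unfolding T_def by (simp add: sum_distrib_left mult.commute)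
    also have "\<dots> \<le> c * (4 * X)" using T4[OF j] c0 by (intro mult_left_mono) auto
    finally show ?thesis .
  qed
  have "1/2 + X = (\<Sum>h\<in>H. W h)" using Wsum unfolding X_def by argo
  also have "\<dots> \<le> (\<Sum>h\<in>H. c * (4 * X))" by (rule sum_mono) (use Wb in auto)
  also have "\<dots> = (c * 8 * real (card H)) * (X / 2)" by simp
  also have "\<dots> \<le> 1 * (X/2)" using c1 X0 by (intro mult_right_mono) auto
  finally show False using X0 by argo
qed

lemma simplex_funcs:
  fixes v :: "nat \<Rightarrow> 'a::real_inner" and d :: nat and s :: real
  assumes s: "s > 0" and dv: "\<forall>i\<in>{1..d+1}. \<forall>j\<in>{1..d+1}. i \<noteq> j \<longrightarrow> dist (v i) (v j) = s"
  defines "\<sigma> \<equiv> (\<Sum>k\<in>{2..d+1}. v k - v 1)"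
  defines "g \<equiv> (\<lambda>h. (2/s\<^sup>2) *\<^sub>R ((v h - v 1) - (1/real(d+1)) *\<^sub>R \<sigma>))"
  shows "\<And>h m. h\<in>{2..d+1} \<Longrightarrow> m\<in>{1..d+1} \<Longrightarrow> inner (v m - v 1) (g h) = (if m = h then 1 else 0)"
    and "\<And>h. h\<in>{2..d+1} \<Longrightarrow> norm (g h) \<le> 4/s"
proof -
  have nu: "norm (v h - v 1) = s" if "h\<in>{2..d+1}" for h
    using dv that by (auto simp: dist_norm)
  have ip: "inner (v h - v 1) (v k - v 1) = (if h = k then s\<^sup>2 else s\<^sup>2/2)"
    if "h\<in>{2..d+1}" "k\<in>{2..d+1}" for h k
  proof (cases "h = k")
    case True then show ?thesis using nu[OF that(1)] by (simp add: power2_norm_eq_inner[symmetric])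
  next
    case False
    have "norm ((v h - v 1) - (v k - v 1)) = s" using dv that False by (auto simp: dist_norm)
    then show ?thesis using False nu[OF that(1)] nu[OF that(2)] by (simp add: dot_norm_neg)
  qed
  have ips: "inner (v m - v 1) \<sigma> = real (d+1) * s\<^sup>2 / 2" if m: "m\<in>{2..d+1}" for m
  proof -
    have "inner (v m - v 1) \<sigma> = (\<Sum>k\<in>{2..d+1}. s\<^sup>2/2 + (if m = k then s\<^sup>2/2 else 0))"
      unfolding \<sigma>_def inner_sum_right by (rule sum.cong) (use ip m in auto)
    also have "\<dots> = real d * s\<^sup>2/2 + s\<^sup>2/2" using m by (simp add: sum.distrib)
    finally show ?thesis by (simp add: algebra_simps)
  qed
  show "inner (v m - v 1) (g h) = (if m = h then 1 else 0)" if h: "h\<in>{2..d+1}" and m: "m\<in>{1..d+1}" for h m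
  proof (cases "m = 1")
    case True then show ?thesis using h by auto
  next
    case False
    then have m2: "m \<in> {2..d+1}" using m by auto
    have "inner (v m - v 1) (g h) = (2/s\<^sup>2) * (inner (v m - v 1) (v h - v 1) - inner (v m - v 1) \<sigma> / real (d+1))"
      unfolding g_def by (simp add: inner_diff_right)
    also have "\<dots> = (2/s\<^sup>2) * ((if m = h then s\<^sup>2 else s\<^sup>2/2) - s\<^sup>2/2)"
    proof -
      have "inner (v m - v 1) \<sigma> / real (d+1) = s\<^sup>2/2" using ips[OF m2] by (simp add: field_simps)
      then show ?thesis using ip[OF m2 h] by (simp add: mult.commute)
    qed
    also have "\<dots> = (if m = h then 1 else 0)" using s by auto
    finally show ?thesis .
  qed
  have ns: "norm \<sigma> \<le> real d * s"
  proof -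
    have "norm \<sigma> \<le> (\<Sum>k\<in>{2..d+1}. norm (v k - v 1))" unfolding \<sigma>_def by (rule norm_sum)
    also have "\<dots> = (\<Sum>k\<in>{2..d+1}. s)" by (rule sum.cong) (use nu in auto)
    finally show ?thesis by simp
  qed
  show "norm (g h) \<le> 4/s" if h: "h\<in>{2..d+1}" for h
  proof -
    have "norm ((1/real(d+1)) *\<^sub>R \<sigma>) = norm \<sigma> / real (d+1)" by simp
    also have "\<dots> \<le> real d * s / real (d+1)" using ns by (intro divide_right_mono) auto
    also have "\<dots> \<le> s" using s by (simp add: field_simps)
    finally have a: "norm ((1/real(d+1)) *\<^sub>R \<sigma>) \<le> s" .
    have "norm ((v h - v 1) - (1/real(d+1)) *\<^sub>R \<sigma>) \<le> norm (v h - v 1) + norm ((1/real(d+1)) *\<^sub>R \<sigma>)"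
      by (rule norm_triangle_ineq4)
    also have "\<dots> \<le> 2 * s" using a nu[OF h] by simp
    finally have b: "norm ((v h - v 1) - (1/real(d+1)) *\<^sub>R \<sigma>) \<le> 2 * s" .
    have "norm (g h) = (2/s\<^sup>2) * norm ((v h - v 1) - (1/real(d+1)) *\<^sub>R \<sigma>)"
      unfolding g_def using s by simp
    also have "\<dots> \<le> (2/s\<^sup>2) * (2 * s)" using b s by (intro mult_left_mono) auto
    also have "\<dots> = 4/s" using s by (simp add: power2_eq_square field_simps)
    finally show ?thesis .
  qed
qed

lemma aff_sum:
  fixes \<alpha> :: "'a::real_inner \<Rightarrow> real"
  assumes "(\<Sum>x\<in>P. \<alpha> x) = 1"
  shows "(\<Sum>x\<in>P. \<alpha> x * (K + inner b x)) = K + inner b (\<Sum>x\<in>P. \<alpha> x *\<^sub>R x)"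
  using assms by (simp add: distrib_left sum.distrib inner_sum_right flip: sum_distrib_right)


lemma pigeon:
  assumes "finite U" "card U < r"
    and disj: "\<forall>j\<in>{1..r}. \<forall>k\<in>{1..r}. j \<noteq> k \<longrightarrow> P j \<inter> P k = {}"
  shows "\<exists>j\<in>{1..r}. P j \<inter> U = {}"
proof (rule ccontr)
  assume "\<not> ?thesis"
  then have "\<forall>j\<in>{1..r}. \<exists>x. x \<in> P j \<inter> U" by blast
  from bchoice[OF this] obtain sel where sel: "\<forall>j\<in>{1..r}. sel j \<in> P j \<inter> U" ..
  have "inj_on sel {1..r}"
  proof (rule inj_onI)
    fix j k assume jk: "j \<in> {1..r}" "k \<in> {1..r}" "sel j = sel k"
    show "j = k"
    proof (rule ccontr)
      assume "j \<noteq> k"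
      then have "P j \<inter> P k = {}" using disj jk by auto
      moreover have "sel j \<in> P j" "sel k \<in> P k" using sel jk(1,2) by auto
      ultimately show False using jk(3) by (metis IntI empty_iff)
    qed
  qed
  moreover have "sel ` {1..r} \<subseteq> U" using sel by auto
  ultimately have "card {1..r} \<le> card U" by (rule card_inj_on_le) (rule assms(1))
  then show False using assms(2) by simp
qed

theorem mainTheorem8:
  fixes r :: nat and v :: "nat \<Rightarrow> real ^ 'n"
  assumes "r \<ge> 2" and "CARD('n) \<ge> 2"
    and "regular_simplex v"
  shows "\<exists>\<epsilon>0>0. \<forall>\<epsilon>. 0 < \<epsilon> \<and> \<epsilon> < \<epsilon>0 \<longrightarrow>
    (\<forall>U :: nat \<Rightarrow> (real ^ 'n) set.
       (\<forall>h\<in>{1..CARD('n)+1}. finite (U h) \<and> U h \<subseteq> cball (v h) \<epsilon>) \<and>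
       card (U 1) = r \<and> (\<forall>h\<in>{2..CARD('n)+1}. card (U h) = r - 1) \<and>
       coords_alg_indep (\<Union>h\<in>{1..CARD('n)+1}. U h)
       \<longrightarrow>
       (let A = (\<Union>h\<in>{1..CARD('n)+1}. U h); M = U 1 in
          convex hull M \<inter> convex hull (A - M) = {} \<and> card M = r \<and>
          \<not> (\<exists>P. proper_partition r A P \<and>
               (\<exists>(z :: real ^ 'n) (\<alpha> :: real ^ 'n \<Rightarrow> real).
                  (\<forall>j\<in>{1..r}. z = (\<Sum>x\<in>P j. \<alpha> x *\<^sub>R x) \<and> (\<Sum>x\<in>P j. \<alpha> x) = 1) \<and>
                  (\<forall>x\<in>M. \<alpha> x < 0) \<and> (\<forall>x\<in>A - M. \<alpha> x > 0)))))"
  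
proof -
  define d where "d = CARD('n)"
  have d1: "d \<ge> 1" using assms(2) unfolding d_def by simp
  obtain s where s: "s > 0" and dv: "\<forall>i\<in>{1..d+1}. \<forall>j\<in>{1..d+1}. i \<noteq> j \<longrightarrow> dist (v i) (v j) = s"
    using assms(3) unfolding regular_simplex_def d_def by blast
  define \<sigma> where "\<sigma> = (\<Sum>k\<in>{2..d+1}. v k - v 1)"
  define g where "g = (\<lambda>h. (2/s\<^sup>2) *\<^sub>R ((v h - v 1) - (1/real(d+1)) *\<^sub>R \<sigma>))"
  have gv: "\<And>h m. h\<in>{2..d+1} \<Longrightarrow> m\<in>{1..d+1} \<Longrightarrow> inner (v m - v 1) (g h) = (if m = h then 1 else 0)"
    unfolding g_def \<sigma>_def by (rule simplex_funcs(1)[OF s dv])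
  have gn: "\<And>h. h\<in>{2..d+1} \<Longrightarrow> norm (g h) \<le> 4/s"
    unfolding g_def \<sigma>_def by (rule simplex_funcs(2)[OF s dv])
  define f where "f h x = inner (g h) x - inner (g h) (v 1)" for h x
  define K where "K = 1 + (\<Sum>h\<in>{2..d+1}. inner (g h) (v 1))"
  define G where "G = (\<Sum>h\<in>{2..d+1}. g h)"
  define F1 where "F1 x = K + inner (- G) x" for x
  have F1eq: "F1 x = 1 - (\<Sum>h\<in>{2..d+1}. f h x)" for x
    unfolding F1_def K_def G_def f_def inner_minus_left inner_sum_left sum_subtractf by simp
  have fv: "f h (v m) = (if m = h then 1 else 0)" if "h\<in>{2..d+1}" "m\<in>{1..d+1}" for h m
    using gv[OF that] unfolding f_def by (simp add: inner_diff_right inner_commute)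
  have flip: "\<bar>f h x - f h y\<bar> \<le> 4/s * dist x y" if h: "h\<in>{2..d+1}" for h x y
  proof -
    have "\<bar>f h x - f h y\<bar> = \<bar>inner (g h) (x - y)\<bar>" unfolding f_def by (simp add: inner_diff_right)
    also have "\<dots> \<le> norm (g h) * norm (x - y)" by (rule Cauchy_Schwarz_ineq2)
    also have "\<dots> \<le> 4/s * dist x y" unfolding dist_norm using gn[OF h] by (intro mult_right_mono) auto
    finally show ?thesis .
  qed
  define \<epsilon>0 where "\<epsilon>0 = s / (32 * real d ^ 2)"
  have e0: "\<epsilon>0 > 0" unfolding \<epsilon>0_def using s d1 by simp
  show ?thesis
    unfolding d_def[symmetric]
  proof (intro exI[of _ \<epsilon>0] conjI e0 allI impI)
    fix \<epsilon> :: real and U :: "nat \<Rightarrow> (real ^ 'n) set"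
    assume "0 < \<epsilon> \<and> \<epsilon> < \<epsilon>0"
    then have ep: "0 < \<epsilon>" "\<epsilon> < \<epsilon>0" by auto
    define c where "c = 4 * real d * \<epsilon> / s"
    have c0: "c \<ge> 0" unfolding c_def using ep s by simp
    have c8: "c * 8 * real d \<le> 1"
    proof -
      have "c * 8 * real d = \<epsilon> * (32 * real d ^ 2) / s" unfolding c_def by (simp add: power2_eq_square)
      also have "\<dots> \<le> \<epsilon>0 * (32 * real d ^ 2) / s" using ep s by (intro divide_right_mono mult_right_mono) auto
      also have "\<dots> = 1" unfolding \<epsilon>0_def using s d1 by simp
      finally show ?thesis .
    qed
    have c4: "c \<le> 1/4"
    proof -
      have "c * 8 * 1 \<le> c * 8 * real d" using c0 d1 by (intro mult_left_mono) auto
      then show ?thesis using c8 by linarith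
    qed
    have es: "4/s * \<epsilon> \<le> c" unfolding c_def using d1 ep s by (simp add: field_simps)
    assume hyp: "(\<forall>h\<in>{1..d+1}. finite (U h) \<and> U h \<subseteq> cball (v h) \<epsilon>) \<and>
       card (U 1) = r \<and> (\<forall>h\<in>{2..d+1}. card (U h) = r - 1) \<and>
       coords_alg_indep (\<Union>h\<in>{1..d+1}. U h)"
    then have Uc: "\<And>h x. h \<in> {1..d+1} \<Longrightarrow> x \<in> U h \<Longrightarrow> dist x (v h) \<le> \<epsilon>"
      and Uf: "\<And>h. h \<in> {1..d+1} \<Longrightarrow> finite (U h)"
      and card1: "card (U 1) = r" and cardh: "\<And>h. h\<in>{2..d+1} \<Longrightarrow> card (U h) = r - 1"
      by (auto simp: dist_commute subset_iff)
    have fc: "\<bar>f h x - (if k = h then 1 else 0)\<bar> \<le> c"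
      if h: "h\<in>{2..d+1}" and k: "k\<in>{1..d+1}" and x: "x \<in> U k" for h k x
    proof -
      have "\<bar>f h x - f h (v k)\<bar> \<le> 4/s * dist x (v k)" by (rule flip[OF h])
      also have "\<dots> \<le> 4/s * \<epsilon>" using Uc[OF k x] s by (intro mult_left_mono) auto
      finally show ?thesis using es fv[OF h k] by simp
    qed
    have Fc: "\<bar>F1 x - (if k = 1 then 1 else 0)\<bar> \<le> c"
      if k: "k\<in>{1..d+1}" and x: "x \<in> U k" for k x
    proof -
      have sk: "(\<Sum>h\<in>{2..d+1}. (if k = h then 1 else 0::real)) = (if k = 1 then 0 else 1)"
        using k by auto
      have "F1 x - (if k = 1 then 1 else 0) = - (\<Sum>h\<in>{2..d+1}. f h x - (if k = h then 1 else 0))"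
        unfolding F1eq sum_subtractf sk by auto
      then have "\<bar>F1 x - (if k = 1 then 1 else 0)\<bar> = \<bar>\<Sum>h\<in>{2..d+1}. f h x - (if k = h then 1 else 0)\<bar>"
        by (simp only: abs_minus_cancel)
      also have "\<dots> \<le> (\<Sum>h\<in>{2..d+1}. \<bar>f h x - (if k = h then 1 else 0)\<bar>)"
        by (rule sum_abs)
      also have "\<dots> \<le> (\<Sum>h\<in>{2..d+1}. 4/s * \<epsilon>)"
      proof (rule sum_mono)
        fix h assume h: "h \<in> {2..d+1}"
        have "\<bar>f h x - f h (v k)\<bar> \<le> 4/s * dist x (v k)" by (rule flip[OF h])
        also have "\<dots> \<le> 4/s * \<epsilon>" using Uc[OF k x] s by (intro mult_left_mono) auto
        finally show "\<bar>f h x - (if k = h then 1 else 0)\<bar> \<le> 4/s * \<epsilon>" using fv[OF h k] by simp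
      qed
      also have "\<dots> = c" unfolding c_def by simp
      finally show ?thesis .
    qed
    define A where "A = (\<Union>h\<in>{1..d+1}. U h)"
    define M where "M = U 1"
    have inA: "\<exists>k\<in>{1..d+1}. x \<in> U k" if "x \<in> A" for x using that unfolding A_def by auto
    have FM: "F1 x \<ge> 1 - c" if "x \<in> M" for x
      using Fc[of 1 x] that unfolding M_def by auto
    have FnM: "F1 x \<le> c" if xAM: "x \<in> A - M" for x
    proof -
      obtain k where k: "k\<in>{1..d+1}" "x \<in> U k" using inA xAM by blast
      then have "k \<noteq> 1" using xAM unfolding M_def by auto
      then show ?thesis using Fc[OF k] by auto
    qed
    have F1lin: "F1 x = K - inner G x" for x unfolding F1_def by simp
    have conv: "convex hull M \<inter> convex hull (A - M) = {}"
    proof -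
      have s1: "M \<subseteq> {x. inner G x \<le> K - (1 - c)}"
      proof
        fix x assume "x \<in> M"
        then have "F1 x \<ge> 1 - c" by (rule FM)
        then show "x \<in> {x. inner G x \<le> K - (1 - c)}" using F1lin[of x] by simp
      qed
      have s2: "A - M \<subseteq> {x. inner G x \<ge> K - c}"
      proof
        fix x assume "x \<in> A - M"
        then have "F1 x \<le> c" by (rule FnM)
        then show "x \<in> {x. inner G x \<ge> K - c}" using F1lin[of x] by simp
      qed
      have "convex hull M \<subseteq> {x. inner G x \<le> K - (1 - c)}"
        using s1 by (rule hull_minimal) (rule convex_halfspace_le)
      moreover have "convex hull (A - M) \<subseteq> {x. inner G x \<ge> K - c}"
        using s2 by (rule hull_minimal) (rule convex_halfspace_ge)
      ultimately show ?thesis using c4 by fastforce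
    qed
    have noP: "\<not> (\<exists>P. proper_partition r A P \<and>
               (\<exists>(z :: real ^ 'n) (\<alpha> :: real ^ 'n \<Rightarrow> real).
                  (\<forall>j\<in>{1..r}. z = (\<Sum>x\<in>P j. \<alpha> x *\<^sub>R x) \<and> (\<Sum>x\<in>P j. \<alpha> x) = 1) \<and>
                  (\<forall>x\<in>M. \<alpha> x < 0) \<and> (\<forall>x\<in>A - M. \<alpha> x > 0)))"
    proof
      assume "\<exists>P. proper_partition r A P \<and>
               (\<exists>(z :: real ^ 'n) (\<alpha> :: real ^ 'n \<Rightarrow> real).
                  (\<forall>j\<in>{1..r}. z = (\<Sum>x\<in>P j. \<alpha> x *\<^sub>R x) \<and> (\<Sum>x\<in>P j. \<alpha> x) = 1) \<and>
                  (\<forall>x\<in>M. \<alpha> x < 0) \<and> (\<forall>x\<in>A - M. \<alpha> x > 0))"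
      then obtain P z \<alpha> where pp: "proper_partition r A P"
        and sol: "\<forall>j\<in>{1..r}. z = (\<Sum>x\<in>P j. \<alpha> x *\<^sub>R x) \<and> (\<Sum>x\<in>P j. \<alpha> x) = 1"
        and aM: "\<forall>x\<in>M. \<alpha> x < 0" and aA: "\<forall>x\<in>A - M. \<alpha> x > 0" by blast
      have PA: "P j \<subseteq> A" if "j \<in> {1..r}" for j using pp that unfolding proper_partition_def by blast
      have Pf: "finite (P j)" if "j \<in> {1..r}" for j using pp that unfolding proper_partition_def by blast
      have disj: "\<forall>j\<in>{1..r}. \<forall>k\<in>{1..r}. j \<noteq> k \<longrightarrow> P j \<inter> P k = {}"
        using pp unfolding proper_partition_def by blast
      have p1: "finite {2..d+1}" by simp
      have p2: "0 \<le> c" by (rule c0)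
      have p3: "c * 8 * real (card {2..d+1}) \<le> 1" using c8 by simp
      have p4: "c \<le> 1/4" by (rule c4)
      have p5: "{1..r} \<noteq> {}" using assms(1) by simp
      have p6: "\<forall>j\<in>{1..r}. finite (P j) \<and> (\<Sum>x\<in>P j. \<alpha> x) = 1 \<and> (\<Sum>x\<in>P j. \<alpha> x * F1 x) = F1 z
         \<and> (\<forall>h\<in>{2..d+1}. (\<Sum>x\<in>P j. \<alpha> x * f h x) = f h z)"
      proof (intro ballI conjI)
        fix j assume j: "j \<in> {1..r}"
        show "finite (P j)" by (rule Pf[OF j])
        have solj: "z = (\<Sum>x\<in>P j. \<alpha> x *\<^sub>R x) \<and> (\<Sum>x\<in>P j. \<alpha> x) = 1" by (rule bspec[OF sol j])
        show s1: "(\<Sum>x\<in>P j. \<alpha> x) = 1" using solj by (rule conjunct2)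
        have zj: "z = (\<Sum>x\<in>P j. \<alpha> x *\<^sub>R x)" using solj by (rule conjunct1)
        show "(\<Sum>x\<in>P j. \<alpha> x * F1 x) = F1 z"
          unfolding F1_def zj by (rule aff_sum[OF s1])
        fix h
        show "(\<Sum>x\<in>P j. \<alpha> x * f h x) = f h z"
          using aff_sum[OF s1, of "- inner (g h) (v 1)" "g h"] unfolding f_def zj by simp
      qed
      have p7: "F1 z + (\<Sum>h\<in>{2..d+1}. f h z) = 1" using F1eq[of z] by simp
      have p8: "\<forall>j\<in>{1..r}. \<forall>x\<in>P j. (x\<in>M \<longrightarrow> \<alpha> x < 0 \<and> F1 x \<ge> 1 - c) \<and> (x\<notin>M \<longrightarrow> \<alpha> x > 0 \<and> F1 x \<le> c)"
      proof (intro ballI conjI impI)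
        fix j x assume j: "j \<in> {1..r}" and x: "x \<in> P j"
        have xA: "x \<in> A" using PA[OF j] x by blast
        show "\<alpha> x < 0" if "x \<in> M" using aM that by blast
        show "F1 x \<ge> 1 - c" if "x \<in> M" using FM that by blast
        show "\<alpha> x > 0" if "x \<notin> M" using aA that xA by blast
        show "F1 x \<le> c" if "x \<notin> M" using FnM that xA by blast
      qed
      have p9: "\<forall>h\<in>{2..d+1}. \<exists>j\<in>{1..r}. \<forall>x\<in>P j. \<bar>f h x\<bar> \<le> c"
      proof
        fix h assume h: "h \<in> {2..d+1}"
        have hU: "h \<in> {1..d+1}" using h by simp
        have cU: "card (U h) < r" using cardh[OF h] assms(1) by simp
        have "\<exists>j\<in>{1..r}. P j \<inter> U h = {}"
          by (rule pigeon[OF Uf[OF hU] cU disj])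
        then obtain j where j: "j \<in> {1..r}" and jU: "P j \<inter> U h = {}" by blast
        show "\<exists>j\<in>{1..r}. \<forall>x\<in>P j. \<bar>f h x\<bar> \<le> c"
        proof (intro bexI[OF _ j] ballI)
          fix x assume x: "x \<in> P j"
          then obtain k where k: "k\<in>{1..d+1}" "x \<in> U k" using inA PA[OF j] by blast
          then have "k \<noteq> h" using jU x by blast
          then show "\<bar>f h x\<bar> \<le> c" using fc[OF h k] by simp
        qed
      qed
      show False by (rule core_ineq[OF p1 p2 p3 p4 p5 p6 p7 p8 p9])
    qed
    show "let A = (\<Union>h\<in>{1..d+1}. U h); M = U 1 in
          convex hull M \<inter> convex hull (A - M) = {} \<and> card M = r \<and>
          \<not> (\<exists>P. proper_partition r A P \<and>
               (\<exists>(z :: real ^ 'n) (\<alpha> :: real ^ 'n \<Rightarrow> real).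
                  (\<forall>j\<in>{1..r}. z = (\<Sum>x\<in>P j. \<alpha> x *\<^sub>R x) \<and> (\<Sum>x\<in>P j. \<alpha> x) = 1) \<and>
                  (\<forall>x\<in>M. \<alpha> x < 0) \<and> (\<forall>x\<in>A - M. \<alpha> x > 0)))"
    proof -
      have cM: "card M = r" using card1 unfolding M_def .
      show ?thesis unfolding Let_def A_def[symmetric] M_def[symmetric] by (intro conjI conv cM noP)
    qed
  qed
qed

end
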